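(* If $Q$ is a quantity space over a field $K$, then any two bases for $Q$ have the same cardinality.
   Context: A scalable monoid over a (unital, associative) ring $R$ is a monoid $X$ (identity $1_X$, product written $xy$) together with a map $R\times X\to X$, $(\alpha,x)\mapsto\alpha\cdot x$, such that $1\cdot x=x$, $\alpha\cdot(\beta\cdot x)=\alpha\beta\cdot x$ and $\alpha\cdot(xy)=(\alpha\cdot x)y=x(\alpha\cdot y)$. A quantity space over a field $K$ is a commutative scalable monoid $Q$ over $K$ for which there exists a basis, i.e. a finite set $\{e_1,\ldots,e_n\}$ of invertible elements of $Q$ such that every $x\in Q$ has a unique expansion $x=\mu\cdot\prod_{i=1}^n e_i^{k_i}$ with $\mu\in K$ and $k_1,\ldots,k_n\in\mathbb{Z}$. *)

theory Defs
  imports Main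
begin

definition monoid_ops :: "('q \<Rightarrow> 'q \<Rightarrow> 'q) \<Rightarrow> 'q \<Rightarrow> bool" where
  "monoid_ops mult one \<longleftrightarrow>
     (\<forall>x y z. mult (mult x y) z = mult x (mult y z)) \<and>
     (\<forall>x. mult one x = x) \<and> (\<forall>x. mult x one = x)"

definition scalable_monoid ::
  "('q \<Rightarrow> 'q \<Rightarrow> 'q) \<Rightarrow> 'q \<Rightarrow> ('k::ring_1 \<Rightarrow> 'q \<Rightarrow> 'q) \<Rightarrow> bool" where
  "scalable_monoid mult one scal \<longleftrightarrow>
     monoid_ops mult one \<and>
     (\<forall>x. scal 1 x = x) \<and>
     (\<forall>a b x. scal a (scal b x) = scal (a * b) x) \<and>
     (\<forall>a x y. scal a (mult x y) = mult (scal a x) y) \<and>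
     (\<forall>a x y. scal a (mult x y) = mult x (scal a y))"

definition invertible_el :: "('q \<Rightarrow> 'q \<Rightarrow> 'q) \<Rightarrow> 'q \<Rightarrow> 'q \<Rightarrow> bool" where
  "invertible_el mult one x \<longleftrightarrow> (\<exists>y. mult x y = one \<and> mult y x = one)"

definition inv_el :: "('q \<Rightarrow> 'q \<Rightarrow> 'q) \<Rightarrow> 'q \<Rightarrow> 'q \<Rightarrow> 'q" where
  "inv_el mult one x = (THE y. mult x y = one \<and> mult y x = one)"

primrec npow :: "('q \<Rightarrow> 'q \<Rightarrow> 'q) \<Rightarrow> 'q \<Rightarrow> 'q \<Rightarrow> nat \<Rightarrow> 'q" where
  "npow mult one x 0 = one"
| "npow mult one x (Suc n) = mult x (npow mult one x n)"

definition zpow :: "('q \<Rightarrow> 'q \<Rightarrow> 'q) \<Rightarrow> 'q \<Rightarrow> 'q \<Rightarrow> int \<Rightarrow> 'q" where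
  "zpow mult one x k =
     (if 0 \<le> k then npow mult one x (nat k)
      else npow mult one (inv_el mult one x) (nat (- k)))"

text \<open>The product \<open>\<Prod>e\<in>E. e ^ k e\<close> in a commutative monoid (well defined by commutativity).\<close>
definition basis_prod ::
  "('q \<Rightarrow> 'q \<Rightarrow> 'q) \<Rightarrow> 'q \<Rightarrow> 'q set \<Rightarrow> ('q \<Rightarrow> int) \<Rightarrow> 'q" where
  "basis_prod mult one E k = Finite_Set.fold (\<lambda>e acc. mult (zpow mult one e (k e)) acc) one E"

definition is_basis ::
  "('q \<Rightarrow> 'q \<Rightarrow> 'q) \<Rightarrow> 'q \<Rightarrow> ('k::field \<Rightarrow> 'q \<Rightarrow> 'q) \<Rightarrow> 'q set \<Rightarrow> bool" where
  "is_basis mult one scal E \<longleftrightarrow>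
     finite E \<and> (\<forall>e\<in>E. invertible_el mult one e) \<and>
     (\<forall>x. \<exists>\<mu> k. x = scal \<mu> (basis_prod mult one E k)) \<and>
     (\<forall>\<mu> k \<mu>' k'. scal \<mu> (basis_prod mult one E k) = scal \<mu>' (basis_prod mult one E k')
        \<longrightarrow> \<mu> = \<mu>' \<and> (\<forall>e\<in>E. k e = k' e))"

definition quantity_space ::
  "('q \<Rightarrow> 'q \<Rightarrow> 'q) \<Rightarrow> 'q \<Rightarrow> ('k::field \<Rightarrow> 'q \<Rightarrow> 'q) \<Rightarrow> bool" where
  "quantity_space mult one scal \<longleftrightarrow>
     scalable_monoid mult one scal \<and> (\<forall>x y. mult x y = mult y x) \<and>
     (\<exists>E. is_basis mult one scal E)"

end

theory Submission
  imports Defs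
begin

locale qsp =
  fixes mult :: "'q \<Rightarrow> 'q \<Rightarrow> 'q" and one :: 'q and scal :: "'k::field \<Rightarrow> 'q \<Rightarrow> 'q"
  assumes qs: "quantity_space mult one scal"
begin

lemma assoc: "mult (mult x y) z = mult x (mult y z)"
  using qs unfolding quantity_space_def scalable_monoid_def monoid_ops_def by blast
lemma comm: "mult x y = mult y x"
  using qs unfolding quantity_space_def by blast
lemma lunit: "mult one x = x"
  using qs unfolding quantity_space_def scalable_monoid_def monoid_ops_def by blast
lemma lcomm: "mult x (mult y z) = mult y (mult x z)"
  by (metis assoc comm)
lemma runit: "mult x one = x"
  using comm lunit by metis
lemma scal_scal: "scal a (scal b x) = scal (a * b) x"
  using qs unfolding quantity_space_def scalable_monoid_def by blast
lemma scal_l: "scal a (mult x y) = mult (scal a x) y"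
  using qs unfolding quantity_space_def scalable_monoid_def by blast
lemma scal_r: "scal a (mult x y) = mult x (scal a y)"
  using qs unfolding quantity_space_def scalable_monoid_def by blast

lemmas ac = assoc comm lcomm

lemma npow_add: "npow mult one x (m + n) = mult (npow mult one x m) (npow mult one x n)"
  by (induction m) (simp_all add: lunit assoc)

lemma npow_one: "npow mult one one n = one"
  by (induction n) (simp_all add: lunit)

lemma npow_distrib: "npow mult one (mult x y) n = mult (npow mult one x n) (npow mult one y n)"
  by (induction n) (simp_all add: lunit ac)

lemma inv_el_eq: assumes "mult e i = one" shows "inv_el mult one e = i"
  unfolding inv_el_def
proof (rule the_equality)
  show "mult e i = one \<and> mult i e = one" using assms comm by metis
next
  fix y assume "mult e y = one \<and> mult y e = one"
  then have "y = mult y (mult e i)" using assms runit by metis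
  also have "\<dots> = i" using \<open>mult e y = one \<and> mult y e = one\<close> by (metis assoc lunit)
  finally show "y = i" .
qed

lemma zpow_diff:
  assumes "mult e i = one"
  shows "zpow mult one e (int m - int n) = mult (npow mult one e m) (npow mult one i n)"
proof -
  have inv: "inv_el mult one e = i" using inv_el_eq assms .
  have can: "mult (npow mult one e k) (npow mult one i k) = one" for k
    using npow_distrib[of e i k] assms npow_one by simp
  show ?thesis
  proof (cases "n \<le> m")
    case True
    then obtain d where m: "m = n + d" using le_Suc_ex by blast
    have "mult (npow mult one e m) (npow mult one i n)
        = mult (npow mult one e d) (mult (npow mult one e n) (npow mult one i n))"
      unfolding m npow_add by (simp add: ac)
    also have "\<dots> = npow mult one e d" using can runit by simp
    finally show ?thesis unfolding zpow_def using m by simp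
  next
    case False
    then obtain d where n: "n = m + d" using le_Suc_ex nat_le_linear by blast
    have "mult (npow mult one e m) (npow mult one i n)
        = mult (mult (npow mult one e m) (npow mult one i m)) (npow mult one i d)"
      unfolding n npow_add by (simp add: ac)
    also have "\<dots> = npow mult one i d" using can lunit by simp
    finally show ?thesis unfolding zpow_def using n False inv by simp
  qed
qed

lemma zpow_add:
  assumes "invertible_el mult one e"
  shows "zpow mult one e (a + b) = mult (zpow mult one e a) (zpow mult one e b)"
proof -
  obtain i where i: "mult e i = one" using assms unfolding invertible_el_def by blast
  obtain m1 n1 where a: "a = int m1 - int n1" by (metis int_diff_cases)
  obtain m2 n2 where b: "b = int m2 - int n2" by (metis int_diff_cases)
  have "a + b = int (m1 + m2) - int (n1 + n2)" using a b by simp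
  then have "zpow mult one e (a + b) = mult (npow mult one e (m1 + m2)) (npow mult one i (n1 + n2))"
    by (simp only: zpow_diff[OF i])
  also have "\<dots> = mult (mult (npow mult one e m1) (npow mult one i n1))
                      (mult (npow mult one e m2) (npow mult one i n2))"
    unfolding npow_add by (simp add: ac)
  finally show ?thesis using zpow_diff[OF i] a b by simp
qed

definition fk :: "('q \<Rightarrow> int) \<Rightarrow> 'q \<Rightarrow> 'q \<Rightarrow> 'q" where
  "fk k = (\<lambda>e acc. mult (zpow mult one e (k e)) acc)"

lemma fk_cfc: "comp_fun_commute_on UNIV (fk k)"
  by unfold_locales (auto simp: fk_def lcomm)

lemma bp_insert: "finite F \<Longrightarrow> x \<notin> F \<Longrightarrow>
   basis_prod mult one (insert x F) k = mult (zpow mult one x (k x)) (basis_prod mult one F k)"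
  unfolding basis_prod_def using comp_fun_commute_on.fold_insert[OF fk_cfc[of k]]
  by (simp add: fk_def)

lemma bp_empty: "basis_prod mult one {} k = one"
  unfolding basis_prod_def by simp

lemma bp_cong: "finite F \<Longrightarrow> (\<forall>e\<in>F. k e = k' e) \<Longrightarrow> basis_prod mult one F k = basis_prod mult one F k'"
  by (induction F rule: finite_induct) (simp_all add: bp_empty bp_insert)

lemma bp_mult: "finite F \<Longrightarrow> (\<forall>e\<in>F. invertible_el mult one e) \<Longrightarrow>
  basis_prod mult one F (\<lambda>e. k e + l e) = mult (basis_prod mult one F k) (basis_prod mult one F l)"
proof (induction F rule: finite_induct)
  case empty then show ?case by (simp add: bp_empty lunit)
next
  case (insert x F)
  then show ?case by (simp add: bp_insert zpow_add ac)
qed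

definition coord :: "'q set \<Rightarrow> 'q \<Rightarrow> 'q \<Rightarrow> int" where
  "coord E x = (SOME k. \<exists>\<mu>. x = scal \<mu> (basis_prod mult one E k))"

definition par :: "'q set \<Rightarrow> 'q \<Rightarrow> 'q set" where
  "par E x = {e\<in>E. odd (coord E x e)}"

lemma coord_ex: "is_basis mult one scal E \<Longrightarrow> \<exists>\<mu>. x = scal \<mu> (basis_prod mult one E (coord E x))"
proof -
  assume "is_basis mult one scal E"
  then have "\<exists>k \<mu>. x = scal \<mu> (basis_prod mult one E k)" unfolding is_basis_def by blast
  then obtain k0 \<mu>0 where "x = scal \<mu>0 (basis_prod mult one E k0)" by blast
  then have "\<exists>\<mu>. x = scal \<mu> (basis_prod mult one E k0)" by blast
  then show ?thesis unfolding coord_def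
    by (rule someI[where P="\<lambda>k. \<exists>\<mu>. x = scal \<mu> (basis_prod mult one E k)"])
qed

lemma coord_eq: "is_basis mult one scal E \<Longrightarrow> x = scal \<mu> (basis_prod mult one E k) \<Longrightarrow> e \<in> E
   \<Longrightarrow> coord E x e = k e"
proof -
  assume b: "is_basis mult one scal E" and x: "x = scal \<mu> (basis_prod mult one E k)" and e: "e \<in> E"
  obtain \<nu> where "x = scal \<nu> (basis_prod mult one E (coord E x))" using coord_ex[OF b] by blast
  then show ?thesis using b x e unfolding is_basis_def by metis
qed

lemma coord_scal: "is_basis mult one scal E \<Longrightarrow> e \<in> E \<Longrightarrow> coord E (scal a x) e = coord E x e"
proof -
  assume b: "is_basis mult one scal E" and e: "e \<in> E"
  obtain \<nu> where "x = scal \<nu> (basis_prod mult one E (coord E x))" using coord_ex[OF b] by blast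
  then have "scal a x = scal (a * \<nu>) (basis_prod mult one E (coord E x))" by (metis scal_scal)
  then show ?thesis using coord_eq[OF b _ e] by blast
qed

lemma coord_mult: "is_basis mult one scal E \<Longrightarrow> e \<in> E \<Longrightarrow>
   coord E (mult x y) e = coord E x e + coord E y e"
proof -
  assume b: "is_basis mult one scal E" and e: "e \<in> E"
  obtain \<mu> where x: "x = scal \<mu> (basis_prod mult one E (coord E x))" using coord_ex[OF b] by blast
  obtain \<nu> where y: "y = scal \<nu> (basis_prod mult one E (coord E y))" using coord_ex[OF b] by blast
  have "mult x y = mult (scal \<mu> (basis_prod mult one E (coord E x))) (scal \<nu> (basis_prod mult one E (coord E y)))"
    using x y by (rule arg_cong2[where f=mult])
  also have "\<dots> = scal \<mu> (scal \<nu> (mult (basis_prod mult one E (coord E x)) (basis_prod mult one E (coord E y))))"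
    by (simp add: scal_l[symmetric] scal_r[symmetric] scal_scal mult.commute)
  also have "\<dots> = scal (\<mu> * \<nu>) (basis_prod mult one E (\<lambda>e. coord E x e + coord E y e))"
    using b unfolding is_basis_def by (simp add: bp_mult scal_scal)
  finally show ?thesis using coord_eq[OF b _ e] by blast
qed

lemma par_range: assumes b: "is_basis mult one scal E" shows "range (par E) = Pow E"
proof
  show "range (par E) \<subseteq> Pow E" unfolding par_def by auto
next
  show "Pow E \<subseteq> range (par E)"
  proof
    fix S assume S: "S \<in> Pow E"
    let ?k = "\<lambda>e. if e \<in> S then 1 else 0 :: int"
    have "basis_prod mult one E ?k = scal 1 (basis_prod mult one E ?k)"
      using qs unfolding quantity_space_def scalable_monoid_def by simp
    then have c: "coord E (basis_prod mult one E ?k) e = ?k e" if "e \<in> E" for e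
      using coord_eq[OF b _ that] by blast
    then have "par E (basis_prod mult one E ?k) = S"
      using S unfolding par_def by (auto split: if_splits)
    then show "S \<in> range (par E)" by (metis rangeI)
  qed
qed

lemma par_factor:
  assumes b: "is_basis mult one scal E" and b': "is_basis mult one scal E'"
    and p: "par E' x = par E' y"
  shows "par E x = par E y"
proof -
  define k where "k = coord E' x"
  define l where "l = coord E' y"
  obtain \<mu> where x: "x = scal \<mu> (basis_prod mult one E' k)" using coord_ex[OF b'] k_def by blast
  obtain \<nu> where y: "y = scal \<nu> (basis_prod mult one E' l)" using coord_ex[OF b'] l_def by blast
  define c where "c = (\<lambda>e. (k e - l e) div 2)"
  have ev: "\<forall>e\<in>E'. k e = l e + c e + c e"
  proof
    fix e assume "e \<in> E'"
    then have "odd (k e) = odd (l e)" using p unfolding par_def k_def l_def by blast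
    then have "even (k e - l e)" by auto
    then show "k e = l e + c e + c e" unfolding c_def by fastforce
  qed
  have fin: "finite E'" and inv: "\<forall>e\<in>E'. invertible_el mult one e" using b' unfolding is_basis_def by auto
  define z where "z = basis_prod mult one E' c"
  define w where "w = basis_prod mult one E' k"
  have "w = basis_prod mult one E' (\<lambda>e. (l e + c e) + c e)"
    unfolding w_def by (rule bp_cong[OF fin]) (use ev in simp)
  also have "\<dots> = mult (mult (basis_prod mult one E' l) z) z"
    unfolding z_def by (simp only: bp_mult[OF fin inv])
  finally have w: "w = mult (mult (basis_prod mult one E' l) z) z" .
  have yzz: "mult (mult y z) z = scal \<nu> w" unfolding y w by (simp add: scal_l)
  have "par E x = par E w" unfolding par_def x w_def using coord_scal[OF b] by auto
  also have "\<dots> = par E (mult (mult y z) z)" unfolding yzz par_def using coord_scal[OF b] by auto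
  also have "\<dots> = par E y" unfolding par_def using coord_mult[OF b] by auto
  finally show ?thesis .
qed

lemma card_le:
  assumes b: "is_basis mult one scal E" and b': "is_basis mult one scal E'"
  shows "card E \<le> card E'"
proof -
  have fin': "finite E'" and fin: "finite E" using b b' unfolding is_basis_def by auto
  define g where "g = (\<lambda>T. par E (SOME x. par E' x = T))"
  have "range (par E) \<subseteq> g ` range (par E')"
  proof
    fix S assume "S \<in> range (par E)"
    then obtain x where S: "S = par E x" by blast
    have "par E' (SOME y. par E' y = par E' x) = par E' x" by (rule someI) simp
    then have "g (par E' x) = S" unfolding g_def S using par_factor[OF b b'] by metis
    then show "S \<in> g ` range (par E')" by (metis rangeI image_eqI)
  qed
  then have "card (Pow E) \<le> card (g ` Pow E')" unfolding par_range[OF b] par_range[OF b']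
    by (intro card_mono) (simp_all add: fin')
  also have "\<dots> \<le> card (Pow E')" by (rule card_image_le) (simp add: fin')
  finally have "(2::nat) ^ card E \<le> 2 ^ card E'" by (simp add: card_Pow fin fin')
  then show ?thesis by simp
qed

end

theorem proposition3p21:
  fixes mult :: "'q \<Rightarrow> 'q \<Rightarrow> 'q" and one :: 'q and scal :: "'k::field \<Rightarrow> 'q \<Rightarrow> 'q"
    and E E' :: "'q set"
  assumes "quantity_space mult one scal"
    and "is_basis mult one scal E"
    and "is_basis mult one scal E'"
  shows "card E = card E'"
proof -
  interpret qsp mult one scal using assms(1) by unfold_locales
  show ?thesis using card_le[OF assms(2,3)] card_le[OF assms(3,2)] by simp
qed

end
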